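(* Let $z\ge0$ be an integer. If an undirected multigraph $G$ has a $z$-antler $(C_1,F_1)$ and $G-(C_1\cup F_1)$ has a $z$-antler $(C_2,F_2)$, then $(C_1\cup C_2,\,F_1\cup F_2)$ is a $z$-antler in $G$.
   Context: A feedback vertex set (FVS) of $G$ is a set $X\subseteq V(G)$ with $G-X$ acyclic (self-loops and pairs of parallel edges count as cycles); $\mathrm{fvs}(G)$ is its minimum size. For disjoint $X,Y$, $e(X,Y)$ is the number of edges between $X$ and $Y$. A feedback vertex cut (FVC) in $G$ is a pair of disjoint sets $C,F\subseteq V(G)$ such that $G[F]$ is a forest and every tree $T$ of $G[F]$ satisfies $e(V(T),V(G)\setminus(C\cup F))\le1$. An antler is a FVC $(C,F)$ with $|C|\le\mathrm{fvs}(G[C\cup F])$. For $C\subseteq V(G)$, a $C$-certificate is a subgraph $H$ of $G$ such that $C$ is a minimum FVS of $H$; it has order $z$ if every component $H'$ of $H$ satisfies $\mathrm{fvs}(H')=|C\cap V(H')|\le z$. A $z$-antler is an antler $(C,F)$ such that $G[C\cup F]$ contains a $C$-certificate of order $z$. *)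

theory Defs
  imports Main "HOL-Library.Multiset"
begin

text \<open>Undirected multigraphs: a vertex set and a multiset of edges; an edge is a
  set of one (self-loop) or two (ordinary edge) vertices.\<close>

type_synonym 'a mgraph = "'a set \<times> 'a set multiset"

definition verts :: "'a mgraph \<Rightarrow> 'a set" where "verts G = fst G"
definition edges :: "'a mgraph \<Rightarrow> 'a set multiset" where "edges G = snd G"

definition wf_mgraph :: "'a mgraph \<Rightarrow> bool" where
  "wf_mgraph G \<longleftrightarrow> finite (verts G) \<and>
     (\<forall>e \<in># edges G. e \<subseteq> verts G \<and> 1 \<le> card e \<and> card e \<le> 2)"

definition subgraph :: "'a mgraph \<Rightarrow> 'a mgraph \<Rightarrow> bool" where
  "subgraph H G \<longleftrightarrow> wf_mgraph H \<and> verts H \<subseteq> verts G \<and> edges H \<subseteq># edges G"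

definition induce :: "'a mgraph \<Rightarrow> 'a set \<Rightarrow> 'a mgraph" where
  "induce G X = (verts G \<inter> X, filter_mset (\<lambda>e. e \<subseteq> X) (edges G))"

definition del_verts :: "'a mgraph \<Rightarrow> 'a set \<Rightarrow> 'a mgraph" where
  "del_verts G X = induce G (verts G - X)"

definition acyclic_mg :: "'a mgraph \<Rightarrow> bool" where
  "acyclic_mg G \<longleftrightarrow>
     (\<forall>v. count (edges G) {v} = 0) \<and>
     (\<forall>u v. u \<noteq> v \<longrightarrow> count (edges G) {u, v} \<le> 1) \<and>
     \<not> (\<exists>vs. length vs \<ge> 3 \<and> distinct vs \<and> set vs \<subseteq> verts G \<and>
           (\<forall>i < length vs - 1. {vs ! i, vs ! (i+1)} \<in># edges G) \<and>
           {last vs, hd vs} \<in># edges G)"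

definition is_fvs :: "'a mgraph \<Rightarrow> 'a set \<Rightarrow> bool" where
  "is_fvs G X \<longleftrightarrow> X \<subseteq> verts G \<and> acyclic_mg (del_verts G X)"

definition fvs :: "'a mgraph \<Rightarrow> nat" where
  "fvs G = Min {card X | X. is_fvs G X}"

definition adj :: "'a mgraph \<Rightarrow> 'a \<Rightarrow> 'a \<Rightarrow> bool" where
  "adj G u v \<longleftrightarrow> u \<noteq> v \<and> {u, v} \<in># edges G"

definition component_verts :: "'a mgraph \<Rightarrow> 'a set set" where
  "component_verts G = (\<lambda>v. {u. (adj G)\<^sup>*\<^sup>* v u}) ` verts G"

definition components :: "'a mgraph \<Rightarrow> 'a mgraph set" where
  "components G = (\<lambda>S. induce G S) ` component_verts G"

definition e_between :: "'a mgraph \<Rightarrow> 'a set \<Rightarrow> 'a set \<Rightarrow> nat" where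
  "e_between G X Y = size (filter_mset (\<lambda>e. e \<inter> X \<noteq> {} \<and> e \<inter> Y \<noteq> {}) (edges G))"

definition is_fvc :: "'a mgraph \<Rightarrow> 'a set \<Rightarrow> 'a set \<Rightarrow> bool" where
  "is_fvc G C F \<longleftrightarrow> C \<subseteq> verts G \<and> F \<subseteq> verts G \<and> C \<inter> F = {} \<and>
     acyclic_mg (induce G F) \<and>
     (\<forall>T \<in> components (induce G F).
        e_between G (verts T) (verts G - (C \<union> F)) \<le> 1)"

definition is_antler :: "'a mgraph \<Rightarrow> 'a set \<Rightarrow> 'a set \<Rightarrow> bool" where
  "is_antler G C F \<longleftrightarrow> is_fvc G C F \<and> card C \<le> fvs (induce G (C \<union> F))"

definition is_certificate :: "'a mgraph \<Rightarrow> 'a set \<Rightarrow> 'a mgraph \<Rightarrow> bool" where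
  "is_certificate G C H \<longleftrightarrow> subgraph H G \<and> is_fvs H C \<and> card C = fvs H"

definition certificate_order :: "'a mgraph \<Rightarrow> 'a set \<Rightarrow> nat \<Rightarrow> bool" where
  "certificate_order H C z \<longleftrightarrow>
     (\<forall>H' \<in> components H. fvs H' = card (C \<inter> verts H') \<and> card (C \<inter> verts H') \<le> z)"

definition is_z_antler :: "'a mgraph \<Rightarrow> nat \<Rightarrow> 'a set \<Rightarrow> 'a set \<Rightarrow> bool" where
  "is_z_antler G z C F \<longleftrightarrow> is_antler G C F \<and>
     (\<exists>H. is_certificate (induce G (C \<union> F)) C H \<and> certificate_order H C z)"

end

theory Submission
  imports Defs
begin

definition gunion :: "'a mgraph \<Rightarrow> 'a mgraph \<Rightarrow> 'a mgraph" where
  "gunion A B = (verts A \<union> verts B, edges A + edges B)"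

lemma verts_pair[simp]: "verts (V, E) = V" by (simp add: verts_def)
lemma edges_pair[simp]: "edges (V, E) = E" by (simp add: edges_def)
lemma verts_induce[simp]: "verts (induce G X) = verts G \<inter> X" by (simp add: induce_def)
lemma edges_induce[simp]: "edges (induce G X) = filter_mset (\<lambda>e. e \<subseteq> X) (edges G)"
  by (simp add: induce_def)
lemma verts_del[simp]: "verts (del_verts G X) = verts G - X" by (auto simp: del_verts_def)
lemma edges_del[simp]: "edges (del_verts G X) = filter_mset (\<lambda>e. e \<subseteq> verts G - X) (edges G)"
  by (simp add: del_verts_def)
lemma verts_gunion[simp]: "verts (gunion A B) = verts A \<union> verts B" by (simp add: gunion_def)
lemma edges_gunion[simp]: "edges (gunion A B) = edges A + edges B" by (simp add: gunion_def)
lemma mg_eqI: "verts A = verts B \<Longrightarrow> edges A = edges B \<Longrightarrow> A = B"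
  by (cases A, cases B) simp
lemma gunion_commute: "gunion A B = gunion B A"
  by (simp add: gunion_def Un_commute add.commute)

lemma wf_induce: "wf_mgraph G \<Longrightarrow> wf_mgraph (induce G X)"
  unfolding wf_mgraph_def by auto
lemma wf_del: "wf_mgraph G \<Longrightarrow> wf_mgraph (del_verts G X)"
  unfolding wf_mgraph_def by auto
lemma wf_edge: "wf_mgraph G \<Longrightarrow> e \<in># edges G \<Longrightarrow> e \<subseteq> verts G \<and> e \<noteq> {} \<and> finite e \<and> card e \<le> 2"
  unfolding wf_mgraph_def by (metis card.empty card.infinite not_one_le_zero)
lemma wf_gunion: "wf_mgraph A \<Longrightarrow> wf_mgraph B \<Longrightarrow> wf_mgraph (gunion A B)"
  unfolding wf_mgraph_def by auto

definition cyc :: "'a set \<Rightarrow> 'a set multiset \<Rightarrow> 'a list \<Rightarrow> bool" where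
  "cyc V E vs \<longleftrightarrow> length vs \<ge> 3 \<and> distinct vs \<and> set vs \<subseteq> V \<and>
     (\<forall>i < length vs - 1. {vs ! i, vs ! (i+1)} \<in># E) \<and> {last vs, hd vs} \<in># E"

lemma acyclic_alt: "acyclic_mg G \<longleftrightarrow> (\<forall>v. count (edges G) {v} = 0) \<and>
   (\<forall>u v. u \<noteq> v \<longrightarrow> count (edges G) {u,v} \<le> 1) \<and> \<not>(\<exists>vs. cyc (verts G) (edges G) vs)"
  by (simp add: acyclic_mg_def cyc_def)

lemma cyc_edge_sub: "cyc V E vs \<Longrightarrow> i < length vs - 1 \<Longrightarrow> {vs ! i, vs ! (i+1)} \<subseteq> set vs"
  unfolding cyc_def by auto

lemma cyc_transfer:
  assumes "cyc V E vs" "set vs \<subseteq> V'" "\<And>e. e \<in># E \<Longrightarrow> e \<subseteq> set vs \<Longrightarrow> e \<in># E'"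
  shows "cyc V' E' vs"
proof -
  have ne: "vs \<noteq> []" using assms(1) unfolding cyc_def by auto
  have "{last vs, hd vs} \<subseteq> set vs" using ne by auto
  moreover have "\<forall>i < length vs - 1. {vs ! i, vs ! (i+1)} \<subseteq> set vs"
    using cyc_edge_sub[OF assms(1)] by blast
  ultimately show ?thesis using assms unfolding cyc_def by auto
qed

lemma cyc_edge_mod:
  assumes "cyc V E vs" "i < length vs"
  shows "{vs ! i, vs ! (Suc i mod length vs)} \<in># E"
proof (cases "i < length vs - 1")
  case True
  then have "Suc i mod length vs = i + 1" by simp
  then show ?thesis using assms True unfolding cyc_def by auto
next
  case False
  then have i: "i = length vs - 1" using assms(2) by simp
  have ne: "vs \<noteq> []" using assms(2) by auto
  have "Suc i mod length vs = 0" using i ne by simp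
  moreover have "vs ! i = last vs" using i ne by (simp add: last_conv_nth)
  moreover have "vs ! 0 = hd vs" using ne by (simp add: hd_conv_nth)
  ultimately show ?thesis using assms unfolding cyc_def by auto
qed

lemma acyclic_mono:
  assumes "acyclic_mg B" "verts A \<subseteq> verts B" "edges A \<subseteq># edges B"
  shows "acyclic_mg A"
proof -
  have c: "count (edges A) e \<le> count (edges B) e" for e
    using assms(3) by (simp add: mset_subset_eq_count)
  have "\<not> cyc (verts A) (edges A) vs" for vs
  proof
    assume cA: "cyc (verts A) (edges A) vs"
    then have "cyc (verts B) (edges B) vs"
      by (rule cyc_transfer) (use assms(2,3) cA in \<open>auto simp: cyc_def dest: mset_subset_eqD\<close>)
    then show False using assms(1) unfolding acyclic_alt by blast
  qed
  then show ?thesis using assms(1) c unfolding acyclic_alt by (metis le_zero_eq order_trans)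
qed

lemma two_elems: "a \<in># M \<Longrightarrow> b \<in># M \<Longrightarrow> a \<noteq> b \<Longrightarrow> 2 \<le> size M"
proof -
  assume a: "a \<in># M" and b: "b \<in># M" and ab: "a \<noteq> b"
  obtain M' where M: "M = add_mset a M'" using multi_member_split[OF a] by blast
  have "b \<in># M'" using b ab M by auto
  then have "size M' \<ge> 1" by (cases M') auto
  then show ?thesis using M by simp
qed

lemma filter_mono_pred: "(\<And>e. e \<in># M \<Longrightarrow> P e \<Longrightarrow> Q e) \<Longrightarrow> filter_mset P M \<subseteq># filter_mset Q M"
  by (rule filter_mset_mono_strong) auto

lemma cross_index:
  fixes P :: "nat \<Rightarrow> bool"
  assumes "a < n" "P a" "b < n" "\<not> P b"
  shows "\<exists>i<n. P i \<and> \<not> P (Suc i mod n)"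
proof (rule ccontr)
  assume "\<not> ?thesis"
  then have H: "\<And>i. i < n \<Longrightarrow> P i \<Longrightarrow> P (Suc i mod n)" by blast
  have n: "n > 0" using assms by simp
  have "P ((a + k) mod n)" for k
  proof (induction k)
    case 0 then show ?case using assms by simp
  next
    case (Suc k)
    have "(a + Suc k) mod n = Suc ((a + k) mod n) mod n" by (simp add: mod_Suc_eq)
    then show ?case using H[OF _ Suc] n by simp
  qed
  from this[of "b + n - a"] have "P ((b + n) mod n)" using assms(1) by simp
  then show False using assms by simp
qed

lemma mod_two_step: "3 \<le> n \<Longrightarrow> i < n \<Longrightarrow> Suc (Suc i mod n) mod n \<noteq> i"
proof -
  assume n: "3 \<le> n" and i: "i < n"
  show ?thesis
  proof (cases "Suc i < n")
    case True
    show ?thesis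
    proof (cases "Suc (Suc i) < n")
      case True then show ?thesis using \<open>Suc i < n\<close> by simp
    next
      case False
      then have "Suc (Suc i) = n" using True by simp
      then show ?thesis using True n by auto
    qed
  next
    case False
    then have "Suc i = n" using i by simp
    then show ?thesis using n by auto
  qed
qed


lemma cyc_gunion_left:
  assumes wA: "wf_mgraph A" and wB: "wf_mgraph B" and disj: "verts A \<inter> verts B = {}"
    and c: "cyc (verts (gunion A B)) (edges (gunion A B)) vs" and h: "hd vs \<in> verts A"
  shows "cyc (verts A) (edges A) vs"
proof -
  have eA: "e \<in># edges A" if "e \<in># edges A + edges B" "x \<in> e" "x \<in> verts A" for e x
  proof (rule ccontr)
    assume "\<not> e \<in># edges A"
    then have "e \<in># edges B" using that(1) by auto
    then have "x \<in> verts B" using wf_edge[OF wB] that(2) by blast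
    then show False using that(3) disj by blast
  qed
  have ne: "vs \<noteq> []" using c unfolding cyc_def by auto
  have all: "i < length vs \<longrightarrow> vs ! i \<in> verts A" for i
  proof (induction i)
    case 0 then show ?case using h ne by (simp add: hd_conv_nth)
  next
    case (Suc i)
    show ?case
    proof
      assume si: "Suc i < length vs"
      then have "{vs ! i, vs ! (i+1)} \<in># edges A + edges B" using c unfolding cyc_def by auto
      then have "{vs ! i, vs ! (i+1)} \<in># edges A" using eA Suc si by auto
      then show "vs ! Suc i \<in> verts A" using wf_edge[OF wA] by auto
    qed
  qed
  then have sv: "set vs \<subseteq> verts A" by (auto simp: set_conv_nth)
  show ?thesis
  proof (rule cyc_transfer[OF c sv])
    fix e assume "e \<in># edges (gunion A B)" "e \<subseteq> set vs"
    moreover have "e \<noteq> {}" using calculation wf_edge[OF wf_gunion[OF wA wB]] by blast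
    ultimately show "e \<in># edges A" using eA sv by auto
  qed
qed

lemma acyclic_gunion:
  assumes wA: "wf_mgraph A" and wB: "wf_mgraph B" and disj: "verts A \<inter> verts B = {}"
    and aA: "acyclic_mg A" and aB: "acyclic_mg B"
  shows "acyclic_mg (gunion A B)"
proof -
  have 1: "\<forall>v. count (edges (gunion A B)) {v} = 0" using aA aB unfolding acyclic_alt by simp
  have 2: "count (edges (gunion A B)) {u,v} \<le> 1" if "u \<noteq> v" for u v
  proof (cases "{u,v} \<in># edges A")
    case True
    then have "{u,v} \<subseteq> verts A" using wf_edge[OF wA] by blast
    then have "{u,v} \<notin># edges B" using wf_edge[OF wB] disj by blast
    then show ?thesis using aA that unfolding acyclic_alt by (simp add: not_in_iff)
  next
    case False
    then show ?thesis using aB that unfolding acyclic_alt by (simp add: not_in_iff)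
  qed
  have 3: "\<not> cyc (verts (gunion A B)) (edges (gunion A B)) vs" for vs
  proof
    assume c: "cyc (verts (gunion A B)) (edges (gunion A B)) vs"
    then have ne: "vs \<noteq> []" and "set vs \<subseteq> verts A \<union> verts B" unfolding cyc_def by auto
    then have "hd vs \<in> verts A \<or> hd vs \<in> verts B" using hd_in_set[OF ne] by blast
    then show False
    proof
      assume "hd vs \<in> verts A"
      then have "cyc (verts A) (edges A) vs" using cyc_gunion_left[OF wA wB disj c] by blast
      then show False using aA unfolding acyclic_alt by blast
    next
      assume "hd vs \<in> verts B"
      moreover have "cyc (verts (gunion B A)) (edges (gunion B A)) vs" using c gunion_commute by metis
      ultimately have "cyc (verts B) (edges B) vs" using cyc_gunion_left[OF wB wA] disj by blast
      then show False using aB unfolding acyclic_alt by blast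
    qed
  qed
  show ?thesis using 1 2 3 unfolding acyclic_alt by blast
qed

lemma del_gunion:
  assumes wA: "wf_mgraph A" and wB: "wf_mgraph B"
  shows "del_verts (gunion A B) X = gunion (del_verts A X) (del_verts B X)"
proof (rule mg_eqI)
  show "verts (del_verts (gunion A B) X) = verts (gunion (del_verts A X) (del_verts B X))" by auto
  have a: "filter_mset (\<lambda>e. e \<subseteq> verts A \<union> verts B - X) (edges A) = filter_mset (\<lambda>e. e \<subseteq> verts A - X) (edges A)"
    by (rule filter_mset_cong0) (use wf_edge[OF wA] in blast)
  have b: "filter_mset (\<lambda>e. e \<subseteq> verts A \<union> verts B - X) (edges B) = filter_mset (\<lambda>e. e \<subseteq> verts B - X) (edges B)"
    by (rule filter_mset_cong0) (use wf_edge[OF wB] in blast)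
  show "edges (del_verts (gunion A B) X) = edges (gunion (del_verts A X) (del_verts B X))"
    using a b by simp
qed

lemma del_irrelevant:
  assumes wA: "wf_mgraph A" and "Y \<inter> verts A = {}"
  shows "del_verts A (X \<union> Y) = del_verts A X"
proof (rule mg_eqI)
  show "verts (del_verts A (X \<union> Y)) = verts (del_verts A X)" using assms by auto
  show "edges (del_verts A (X \<union> Y)) = edges (del_verts A X)"
    using assms by simp (rule filter_mset_cong0, use wf_edge[OF wA] in blast)
qed

lemma is_fvs_all: "is_fvs G (verts G)"
  unfolding is_fvs_def acyclic_alt cyc_def by (auto simp: not_in_iff)

lemma fvs_facts:
  assumes "finite (verts G)"
  shows "\<And>X. is_fvs G X \<Longrightarrow> fvs G \<le> card X" and "\<exists>X. is_fvs G X \<and> card X = fvs G"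
proof -
  let ?S = "{card X | X. is_fvs G X}"
  have fin: "finite ?S"
  proof (rule finite_subset)
    show "?S \<subseteq> {..card (verts G)}" using assms by (auto simp: is_fvs_def card_mono)
  qed simp
  have ne: "?S \<noteq> {}" using is_fvs_all by blast
  show "\<And>X. is_fvs G X \<Longrightarrow> fvs G \<le> card X" unfolding fvs_def using fin by (auto intro: Min_le)
  show "\<exists>X. is_fvs G X \<and> card X = fvs G" unfolding fvs_def using Min_in[OF fin ne] by auto
qed

lemma is_fvs_gunion:
  assumes wA: "wf_mgraph A" and wB: "wf_mgraph B" and disj: "verts A \<inter> verts B = {}"
    and X: "is_fvs A X" and Y: "is_fvs B Y"
  shows "is_fvs (gunion A B) (X \<union> Y)"
proof -
  have XA: "X \<subseteq> verts A" and YB: "Y \<subseteq> verts B" using X Y unfolding is_fvs_def by auto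
  have "del_verts (gunion A B) (X \<union> Y) = gunion (del_verts A (X \<union> Y)) (del_verts B (Y \<union> X))"
    using del_gunion[OF wA wB] by (metis sup_commute)
  also have "\<dots> = gunion (del_verts A X) (del_verts B Y)"
  proof -
    have "Y \<inter> verts A = {}" "X \<inter> verts B = {}" using XA YB disj by auto
    then show ?thesis using del_irrelevant[OF wA, of Y X] del_irrelevant[OF wB, of X Y] by simp
  qed
  finally have eq: "del_verts (gunion A B) (X \<union> Y) = gunion (del_verts A X) (del_verts B Y)" .
  have "acyclic_mg (gunion (del_verts A X) (del_verts B Y))"
    by (rule acyclic_gunion) (use wf_del[OF wA] wf_del[OF wB] disj X Y in \<open>auto simp: is_fvs_def\<close>)
  then show ?thesis using eq XA YB unfolding is_fvs_def by auto
qed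

lemma is_fvs_sub:
  assumes "is_fvs K X" "verts H \<subseteq> verts K" "edges H \<subseteq># edges K"
  shows "is_fvs H (X \<inter> verts H)"
proof -
  have "acyclic_mg (del_verts K X)" using assms unfolding is_fvs_def by auto
  moreover have "verts (del_verts H (X \<inter> verts H)) \<subseteq> verts (del_verts K X)" using assms by auto
  moreover have "edges (del_verts H (X \<inter> verts H)) \<subseteq># edges (del_verts K X)"
  proof -
    have "filter_mset (\<lambda>e. e \<subseteq> verts H - X \<inter> verts H) (edges H) \<subseteq># filter_mset (\<lambda>e. e \<subseteq> verts K - X) (edges K)"
      by (rule filter_mset_mono_strong[OF assms(3)]) (use assms(2) in auto)
    then show ?thesis by simp
  qed
  ultimately have "acyclic_mg (del_verts H (X \<inter> verts H))" by (rule acyclic_mono)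
  then show ?thesis unfolding is_fvs_def by auto
qed

lemma fvs_mono_sub:
  assumes wK: "wf_mgraph K" and s: "subgraph H K"
  shows "fvs H \<le> fvs K"
proof -
  have fK: "finite (verts K)" using wK unfolding wf_mgraph_def by auto
  have fH: "finite (verts H)" using s unfolding subgraph_def wf_mgraph_def by auto
  obtain X where X: "is_fvs K X" "card X = fvs K" using fvs_facts(2)[OF fK] by blast
  have "is_fvs H (X \<inter> verts H)" using is_fvs_sub[OF X(1)] s unfolding subgraph_def by auto
  then have "fvs H \<le> card (X \<inter> verts H)" using fvs_facts(1)[OF fH] by blast
  also have "\<dots> \<le> card X" using X(1) fK unfolding is_fvs_def
    by (meson card_mono inf_le1 finite_subset)
  finally show ?thesis using X by simp
qed

lemma fvs_gunion:
  assumes wA: "wf_mgraph A" and wB: "wf_mgraph B" and disj: "verts A \<inter> verts B = {}"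
  shows "fvs (gunion A B) = fvs A + fvs B"
proof -
  have fA: "finite (verts A)" and fB: "finite (verts B)" using wA wB unfolding wf_mgraph_def by auto
  have fU: "finite (verts (gunion A B))" using fA fB by simp
  obtain X where X: "is_fvs A X" "card X = fvs A" using fvs_facts(2)[OF fA] by blast
  obtain Y where Y: "is_fvs B Y" "card Y = fvs B" using fvs_facts(2)[OF fB] by blast
  have XA: "X \<subseteq> verts A" and YB: "Y \<subseteq> verts B" using X Y unfolding is_fvs_def by auto
  have "fvs (gunion A B) \<le> card (X \<union> Y)"
    using fvs_facts(1)[OF fU is_fvs_gunion[OF wA wB disj X(1) Y(1)]] .
  also have "card (X \<union> Y) = card X + card Y"
    using XA YB disj fA fB by (meson card_Un_disjoint disjoint_iff finite_subset subsetD)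
  finally have le: "fvs (gunion A B) \<le> fvs A + fvs B" using X Y by simp
  obtain Z where Z: "is_fvs (gunion A B) Z" "card Z = fvs (gunion A B)" using fvs_facts(2)[OF fU] by blast
  have ZU: "Z \<subseteq> verts A \<union> verts B" using Z unfolding is_fvs_def by auto
  have za: "is_fvs A (Z \<inter> verts A)" by (rule is_fvs_sub[OF Z(1)]) auto
  have zb: "is_fvs B (Z \<inter> verts B)" by (rule is_fvs_sub[OF Z(1)]) auto
  have "fvs A + fvs B \<le> card (Z \<inter> verts A) + card (Z \<inter> verts B)"
    using fvs_facts(1)[OF fA za] fvs_facts(1)[OF fB zb] by simp
  also have "\<dots> = card ((Z \<inter> verts A) \<union> (Z \<inter> verts B))"
    using disj fA fB by (intro card_Un_disjoint[symmetric]) auto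
  also have "(Z \<inter> verts A) \<union> (Z \<inter> verts B) = Z" using ZU by auto
  finally show ?thesis using le Z by simp
qed


lemma adj_sym: "adj G u v = adj G v u"
  unfolding adj_def by (auto simp: insert_commute)

lemma rtr_sym: "(adj G)\<^sup>*\<^sup>* u v \<Longrightarrow> (adj G)\<^sup>*\<^sup>* v u"
proof (induction rule: rtranclp_induct)
  case base then show ?case by simp
next
  case (step y z)
  then show ?case using adj_sym by (metis converse_rtranclp_into_rtranclp)
qed

lemma adj_gunion: "adj (gunion A B) u v \<longleftrightarrow> adj A u v \<or> adj B u v"
  unfolding adj_def by auto

lemma reach_in:
  assumes wA: "wf_mgraph A"
  shows "(adj A)\<^sup>*\<^sup>* v u \<Longrightarrow> v \<in> verts A \<Longrightarrow> u \<in> verts A"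
proof (induction rule: rtranclp_induct)
  case (step y z) then show ?case using wf_edge[OF wA] unfolding adj_def by blast
qed simp

lemma reach_gunion_left:
  assumes wA: "wf_mgraph A" and wB: "wf_mgraph B" and disj: "verts A \<inter> verts B = {}"
    and v: "v \<in> verts A"
  shows "(adj (gunion A B))\<^sup>*\<^sup>* v u \<longleftrightarrow> (adj A)\<^sup>*\<^sup>* v u"
proof
  assume "(adj (gunion A B))\<^sup>*\<^sup>* v u"
  then have "(adj A)\<^sup>*\<^sup>* v u \<and> u \<in> verts A"
  proof (induction rule: rtranclp_induct)
    case base then show ?case using v by simp
  next
    case (step y z)
    show ?case
    proof (cases "adj A y z")
      case True
      have "z \<in> verts A" using True wf_edge[OF wA] unfolding adj_def by blast
      moreover have "(adj A)\<^sup>*\<^sup>* v z" using step True by (meson rtranclp.rtrancl_into_rtrancl)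
      ultimately show ?thesis by blast
    next
      case False
      then have "adj B y z" using step adj_gunion by metis
      then have "y \<in> verts B" using wf_edge[OF wB] unfolding adj_def by blast
      then show ?thesis using step disj by blast
    qed
  qed
  then show "(adj A)\<^sup>*\<^sup>* v u" by blast
next
  assume "(adj A)\<^sup>*\<^sup>* v u"
  then show "(adj (gunion A B))\<^sup>*\<^sup>* v u"
  proof (induction rule: rtranclp_induct)
    case (step y z) then show ?case using adj_gunion
      by (metis rtranclp.rtrancl_into_rtrancl)
  qed simp
qed

lemma comp_gunion_left:
  assumes wA: "wf_mgraph A" and wB: "wf_mgraph B" and disj: "verts A \<inter> verts B = {}"
    and S: "S \<in> component_verts A"
  shows "S \<in> component_verts (gunion A B)" and "induce (gunion A B) S = induce A S"
proof -
  obtain v where v: "v \<in> verts A" and Sv: "S = {u. (adj A)\<^sup>*\<^sup>* v u}"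
    using S unfolding component_verts_def by blast
  have S2: "S = {u. (adj (gunion A B))\<^sup>*\<^sup>* v u}" using Sv reach_gunion_left[OF wA wB disj v] by simp
  then show "S \<in> component_verts (gunion A B)" using v unfolding component_verts_def by auto
  have SA: "S \<subseteq> verts A" using Sv reach_in[OF wA] v by blast
  show "induce (gunion A B) S = induce A S"
  proof (rule mg_eqI)
    show "verts (induce (gunion A B) S) = verts (induce A S)" using SA disj by auto
    have "filter_mset (\<lambda>e. e \<subseteq> S) (edges B) = {#}"
    proof -
      have "\<not> e \<subseteq> S" if "e \<in># edges B" for e
        using SA disj wf_edge[OF wB that] by blast
      then show ?thesis by simp
    qed
    then show "edges (induce (gunion A B) S) = edges (induce A S)" by simp
  qed
qed

lemma components_gunion:
  assumes wA: "wf_mgraph A" and wB: "wf_mgraph B" and disj: "verts A \<inter> verts B = {}"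
  shows "components (gunion A B) = components A \<union> components B"
proof -
  have disj': "verts B \<inter> verts A = {}" using disj by blast
  have cv: "component_verts (gunion A B) = component_verts A \<union> component_verts B"
  proof
    show "component_verts A \<union> component_verts B \<subseteq> component_verts (gunion A B)"
      using comp_gunion_left(1)[OF wA wB disj] comp_gunion_left(1)[OF wB wA disj']
      by (auto simp: gunion_commute)
    show "component_verts (gunion A B) \<subseteq> component_verts A \<union> component_verts B"
    proof
      fix S assume "S \<in> component_verts (gunion A B)"
      then obtain v where v: "v \<in> verts A \<union> verts B" and Sv: "S = {u. (adj (gunion A B))\<^sup>*\<^sup>* v u}"
        unfolding component_verts_def by auto
      show "S \<in> component_verts A \<union> component_verts B"
      proof (cases "v \<in> verts A")
        case True
        then show ?thesis using Sv reach_gunion_left[OF wA wB disj True] unfolding component_verts_def by auto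
      next
        case False
        then have vb: "v \<in> verts B" using v by auto
        have "S = {u. (adj (gunion B A))\<^sup>*\<^sup>* v u}" using Sv by (simp add: gunion_commute)
        then show ?thesis using reach_gunion_left[OF wB wA disj' vb] vb unfolding component_verts_def by auto
      qed
    qed
  qed
  have iA: "(\<lambda>S. induce (gunion A B) S) ` component_verts A = components A"
    unfolding components_def using comp_gunion_left(2)[OF wA wB disj] by (auto simp: image_def)
  have iB: "(\<lambda>S. induce (gunion A B) S) ` component_verts B = components B"
  proof -
    have "induce (gunion A B) S = induce B S" if "S \<in> component_verts B" for S
      using comp_gunion_left(2)[OF wB wA disj' that] by (simp add: gunion_commute)
    then show ?thesis unfolding components_def by (auto simp: image_def)
  qed
  show ?thesis unfolding components_def[of "gunion A B"] cv image_Un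
    using iA iB by simp
qed

lemma filter_add_sub:
  assumes "\<And>e. e \<in># M \<Longrightarrow> P e \<Longrightarrow> Q e \<Longrightarrow> False" "\<And>e. e \<in># M \<Longrightarrow> P e \<or> Q e \<Longrightarrow> R e"
  shows "filter_mset P M + filter_mset Q M \<subseteq># filter_mset R M"
proof (rule mset_subset_eqI)
  fix e
  show "count (filter_mset P M + filter_mset Q M) e \<le> count (filter_mset R M) e"
    using assms by (cases "e \<in># M") (auto simp: not_in_iff)
qed


lemma comp_verts_sub: "H' \<in> components H \<Longrightarrow> verts H' \<subseteq> verts H"
  unfolding components_def by auto

lemma cert_combine:
  assumes wG: "wf_mgraph G"
    and sub: "C2 \<union> F2 \<subseteq> verts G - (C1 \<union> F1)"
    and c1: "is_certificate (induce G (C1 \<union> F1)) C1 H1" and o1: "certificate_order H1 C1 z"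
    and c2: "is_certificate (induce (del_verts G (C1 \<union> F1)) (C2 \<union> F2)) C2 H2"
    and o2: "certificate_order H2 C2 z"
  shows "is_certificate (induce G ((C1 \<union> C2) \<union> (F1 \<union> F2))) (C1 \<union> C2) (gunion H1 H2)
       \<and> certificate_order (gunion H1 H2) (C1 \<union> C2) z"
proof -
  let ?V = "verts G" and ?E = "edges G"
  have w1: "wf_mgraph H1" and v1: "verts H1 \<subseteq> ?V \<inter> (C1 \<union> F1)"
    and e1: "edges H1 \<subseteq># filter_mset (\<lambda>e. e \<subseteq> C1 \<union> F1) ?E"
    and f1: "is_fvs H1 C1" and k1: "card C1 = fvs H1"
    using c1 unfolding is_certificate_def subgraph_def by auto
  have w2: "wf_mgraph H2" and v2: "verts H2 \<subseteq> (?V - (C1 \<union> F1)) \<inter> (C2 \<union> F2)"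
    and e2: "edges H2 \<subseteq># filter_mset (\<lambda>e. e \<subseteq> C2 \<union> F2) (filter_mset (\<lambda>e. e \<subseteq> ?V - (C1 \<union> F1)) ?E)"
    and f2: "is_fvs H2 C2" and k2: "card C2 = fvs H2"
    using c2 unfolding is_certificate_def subgraph_def by auto
  have disj: "verts H1 \<inter> verts H2 = {}" using v1 v2 by blast
  have C1H: "C1 \<subseteq> verts H1" and C2H: "C2 \<subseteq> verts H2" using f1 f2 unfolding is_fvs_def by auto
  have fin1: "finite (verts H1)" and fin2: "finite (verts H2)" using w1 w2 unfolding wf_mgraph_def by auto
  have "edges H1 + edges H2 \<subseteq># filter_mset (\<lambda>e. e \<subseteq> C1 \<union> F1) ?E
         + filter_mset (\<lambda>e. e \<subseteq> ?V - (C1 \<union> F1) \<and> e \<subseteq> C2 \<union> F2) ?E"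
    using subset_mset.add_mono[OF e1 e2] by (simp add: filter_filter_mset)
  also have "\<dots> \<subseteq># filter_mset (\<lambda>e. e \<subseteq> (C1 \<union> C2) \<union> (F1 \<union> F2)) ?E"
  proof (rule filter_add_sub)
    fix e assume "e \<in># ?E" "e \<subseteq> C1 \<union> F1" "e \<subseteq> ?V - (C1 \<union> F1) \<and> e \<subseteq> C2 \<union> F2"
    then show False using wf_edge[OF wG] by blast
  qed auto
  finally have esub: "edges (gunion H1 H2) \<subseteq># edges (induce G ((C1 \<union> C2) \<union> (F1 \<union> F2)))" by simp
  have sg: "subgraph (gunion H1 H2) (induce G ((C1 \<union> C2) \<union> (F1 \<union> F2)))"
    unfolding subgraph_def using wf_gunion[OF w1 w2] esub v1 v2 by auto
  have fv: "is_fvs (gunion H1 H2) (C1 \<union> C2)" by (rule is_fvs_gunion[OF w1 w2 disj f1 f2])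
  have "card (C1 \<union> C2) = card C1 + card C2"
    using C1H C2H disj fin1 fin2 by (intro card_Un_disjoint) (auto intro: finite_subset)
  then have kk: "card (C1 \<union> C2) = fvs (gunion H1 H2)" using k1 k2 fvs_gunion[OF w1 w2 disj] by simp
  have ord: "certificate_order (gunion H1 H2) (C1 \<union> C2) z"
    unfolding certificate_order_def
  proof
    fix H' assume "H' \<in> components (gunion H1 H2)"
    then have "H' \<in> components H1 \<or> H' \<in> components H2" using components_gunion[OF w1 w2 disj] by blast
    then show "fvs H' = card ((C1 \<union> C2) \<inter> verts H') \<and> card ((C1 \<union> C2) \<inter> verts H') \<le> z"
    proof
      assume h: "H' \<in> components H1"
      then have "(C1 \<union> C2) \<inter> verts H' = C1 \<inter> verts H'" using comp_verts_sub[OF h] C2H disj by blast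
      then show ?thesis using o1 h unfolding certificate_order_def by simp
    next
      assume h: "H' \<in> components H2"
      then have "(C1 \<union> C2) \<inter> verts H' = C2 \<inter> verts H'" using comp_verts_sub[OF h] C1H disj by blast
      then show ?thesis using o2 h unfolding certificate_order_def by simp
    qed
  qed
  show ?thesis using sg fv kk ord unfolding is_certificate_def by simp
qed


lemma filter_sub_filter:
  assumes "\<And>e. e \<in># M \<Longrightarrow> P e \<Longrightarrow> Q e \<and> P' e"
  shows "filter_mset P M \<subseteq># filter_mset P' (filter_mset Q M)"
proof (rule mset_subset_eqI)
  fix e
  show "count (filter_mset P M) e \<le> count (filter_mset P' (filter_mset Q M)) e"
    using assms[of e] by (cases "e \<in># M") (auto simp: not_in_iff)
qed

lemma edge_pair:
  assumes "wf_mgraph G" "e \<in># edges G" "x \<in> e" "y \<in> e" "x \<noteq> y"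
  shows "e = {x, y}"
proof -
  have f: "finite e" "card e \<le> 2" using wf_edge[OF assms(1,2)] by auto
  have "{x,y} \<subseteq> e" using assms by auto
  moreover have "card {x,y} = 2" using assms(5) by simp
  ultimately show ?thesis using f by (metis card_seteq)
qed

lemma comp_of:
  assumes "x \<in> verts H"
  shows "induce H {u. (adj H)\<^sup>*\<^sup>* x u} \<in> components H"
  using assms unfolding components_def component_verts_def by auto

lemma fvc_combine:
  assumes wG: "wf_mgraph G" and a1: "is_fvc G C1 F1"
    and a2: "is_fvc (del_verts G (C1 \<union> F1)) C2 F2"
  shows "is_fvc G (C1 \<union> C2) (F1 \<union> F2)"
proof -
  define V where "V = verts G"
  define E where "E = edges G"
  define G' where "G' = del_verts G (C1 \<union> F1)"
  have vG': "verts G' = V - (C1 \<union> F1)" unfolding G'_def V_def by simp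
  have eG': "edges G' = filter_mset (\<lambda>e. e \<subseteq> V - (C1 \<union> F1)) E" unfolding G'_def V_def E_def by simp
  have C1V: "C1 \<subseteq> V" and F1V: "F1 \<subseteq> V" and CF1: "C1 \<inter> F1 = {}"
    and ac1: "acyclic_mg (induce G F1)"
    and t1: "\<forall>T \<in> components (induce G F1). e_between G (verts T) (V - (C1 \<union> F1)) \<le> 1"
    using a1 unfolding is_fvc_def V_def by auto
  have C2V: "C2 \<subseteq> V - (C1 \<union> F1)" and F2V: "F2 \<subseteq> V - (C1 \<union> F1)" and CF2: "C2 \<inter> F2 = {}"
    and ac2: "acyclic_mg (induce G' F2)"
    and t2: "\<forall>T \<in> components (induce G' F2). e_between G' (verts T) (verts G' - (C2 \<union> F2)) \<le> 1"
    using a2 vG' unfolding is_fvc_def G'_def by auto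
  have eV: "\<And>e. e \<in># E \<Longrightarrow> e \<subseteq> V" using wf_edge[OF wG] unfolding V_def E_def by blast
  define R1 where "R1 = adj (induce G F1)"
  define R2 where "R2 = adj (induce G' F2)"
  define R where "R = adj (induce G (F1 \<union> F2))"
  have R1_iff: "R1 x y \<longleftrightarrow> x \<noteq> y \<and> {x,y} \<in># E \<and> x \<in> F1 \<and> y \<in> F1" for x y
    unfolding R1_def adj_def E_def by auto
  have R2_iff: "R2 x y \<longleftrightarrow> x \<noteq> y \<and> {x,y} \<in># E \<and> x \<in> F2 \<and> y \<in> F2" for x y
    using F2V unfolding R2_def adj_def by (auto simp: eG')
  have R_iff: "R x y \<longleftrightarrow> x \<noteq> y \<and> {x,y} \<in># E \<and> x \<in> F1 \<union> F2 \<and> y \<in> F1 \<union> F2" for x y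
    unfolding R_def adj_def E_def by auto
  define T1 where "T1 x = V \<inter> F1 \<inter> {u. R1\<^sup>*\<^sup>* x u}" for x
  define T2 where "T2 x = verts G' \<inter> F2 \<inter> {u. R2\<^sup>*\<^sup>* x u}" for x
  have comp1: "e_between G (T1 x) (V - (C1 \<union> F1)) \<le> 1" if "x \<in> V \<inter> F1" for x
  proof -
    have "induce (induce G F1) {u. R1\<^sup>*\<^sup>* x u} \<in> components (induce G F1)"
      unfolding R1_def by (rule comp_of) (use that V_def in simp)
    then show ?thesis using t1 unfolding T1_def V_def by auto
  qed
  have comp2: "e_between G' (T2 x) (verts G' - (C2 \<union> F2)) \<le> 1" if "x \<in> verts G' \<inter> F2" for x
  proof -
    have "induce (induce G' F2) {u. R2\<^sup>*\<^sup>* x u} \<in> components (induce G' F2)"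
      unfolding R2_def by (rule comp_of) (use that in simp)
    then show ?thesis using t2 unfolding T2_def by auto
  qed
  have no2: False if "x \<in> V \<inter> F1" "e1 \<in># E" "e2 \<in># E" "e1 \<noteq> e2"
    "e1 \<inter> T1 x \<noteq> {}" "e1 \<inter> (V - (C1 \<union> F1)) \<noteq> {}"
    "e2 \<inter> T1 x \<noteq> {}" "e2 \<inter> (V - (C1 \<union> F1)) \<noteq> {}" for x e1 e2
  proof -
    let ?M = "filter_mset (\<lambda>e. e \<inter> T1 x \<noteq> {} \<and> e \<inter> (V - (C1 \<union> F1)) \<noteq> {}) E"
    have "2 \<le> size ?M" by (rule two_elems[of e1 _ e2]) (use that in auto)
    then show False using comp1[OF that(1)] unfolding e_between_def E_def by simp
  qed
  have nopar: False if "x \<in> V \<inter> F1" "2 \<le> count E e"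
    "e \<inter> T1 x \<noteq> {}" "e \<inter> (V - (C1 \<union> F1)) \<noteq> {}" for x e
  proof -
    let ?M = "filter_mset (\<lambda>e. e \<inter> T1 x \<noteq> {} \<and> e \<inter> (V - (C1 \<union> F1)) \<noteq> {}) E"
    have "count ?M e = count E e" using that by simp
    then have "2 \<le> size ?M" using that count_le_size[of ?M e] by simp
    then show False using comp1[OF that(1)] unfolding e_between_def E_def by simp
  qed
  have T1_self: "x \<in> T1 x" if "x \<in> V \<inter> F1" for x using that unfolding T1_def by simp
  have F12: "F1 \<inter> F2 = {}" using F2V by blast
  have cnt1: "count (edges (induce G F1)) e = count E e" if "e \<subseteq> F1" for e
    using that unfolding E_def by simp
  have cnt2: "count (edges (induce G' F2)) e = count E e" if "e \<subseteq> F2" for e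
    using that F2V by (auto simp: eG')
  have mixed: False if "u \<in> F1" "v \<in> F2" "2 \<le> count E {u,v}" for u v
  proof -
    have "{u,v} \<in># E" using that(3) by (metis not_in_iff not_numeral_le_zero)
    then have uV: "u \<in> V" using eV by blast
    show False
      by (rule nopar[of u "{u,v}"]) (use that uV T1_self F2V in auto)
  qed
  have A1: "\<forall>v. count (edges (induce G (F1 \<union> F2))) {v} = 0"
  proof (rule allI, rule ccontr)
    fix v assume h: "count (edges (induce G (F1 \<union> F2))) {v} \<noteq> 0"
    then have v: "v \<in> F1 \<union> F2" and c: "count E {v} \<noteq> 0" unfolding E_def by (auto split: if_splits)
    from v show False
    proof
      assume "v \<in> F1"
      moreover have "count (edges (induce G F1)) {v} = 0" using ac1 unfolding acyclic_alt by blast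
      ultimately show False using c cnt1[of "{v}"] by (metis empty_subsetI insert_subset)
    next
      assume "v \<in> F2"
      moreover have "count (edges (induce G' F2)) {v} = 0" using ac2 unfolding acyclic_alt by blast
      ultimately show False using c cnt2[of "{v}"] by (metis empty_subsetI insert_subset)
    qed
  qed
  have A2: "count (edges (induce G (F1 \<union> F2))) {u,v} \<le> 1" if uv: "u \<noteq> v" for u v
  proof (rule ccontr)
    assume h: "\<not> ?thesis"
    then have s: "{u,v} \<subseteq> F1 \<union> F2" and c: "2 \<le> count E {u,v}" unfolding E_def by (auto split: if_splits)
    consider "u \<in> F1" "v \<in> F1" | "u \<in> F2" "v \<in> F2" | "u \<in> F1" "v \<in> F2" | "u \<in> F2" "v \<in> F1"
      using s by blast
    then show False
    proof cases
      case 1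
      then have "count (edges (induce G F1)) {u,v} \<le> 1" using ac1 uv unfolding acyclic_alt by blast
      moreover have "{u,v} \<subseteq> F1" using 1 by simp
      ultimately show False using c cnt1[of "{u,v}"] by simp
    next
      case 2
      then have "count (edges (induce G' F2)) {u,v} \<le> 1" using ac2 uv unfolding acyclic_alt by blast
      moreover have "{u,v} \<subseteq> F2" using 2 by simp
      ultimately show False using c cnt2[of "{u,v}"] by simp
    next
      case 3 then show False using mixed c by blast
    next
      case 4 then show False using mixed[of v u] c by (simp add: insert_commute)
    qed
  qed
  have A3: "\<not> cyc (verts (induce G (F1 \<union> F2))) (edges (induce G (F1 \<union> F2))) vs" for vs
  proof
    assume c: "cyc (verts (induce G (F1 \<union> F2))) (edges (induce G (F1 \<union> F2))) vs"
    define n where "n = length vs"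
    have n3: "3 \<le> n" and dist: "distinct vs" and sv: "set vs \<subseteq> V \<inter> (F1 \<union> F2)"
      using c unfolding cyc_def n_def V_def by auto
    have ee: "\<And>e. e \<in># edges (induce G (F1 \<union> F2)) \<Longrightarrow> e \<in># E" unfolding E_def by simp
    show False
    proof (cases "set vs \<subseteq> F1")
      case True
      have "cyc (verts (induce G F1)) (edges (induce G F1)) vs"
        by (rule cyc_transfer[OF c]) (use True sv V_def E_def in auto)
      then show False using ac1 unfolding acyclic_alt by blast
    next
      case nF1: False
      show False
      proof (cases "set vs \<subseteq> F2")
        case True
        have "cyc (verts (induce G' F2)) (edges (induce G' F2)) vs"
          by (rule cyc_transfer[OF c]) (use True sv vG' F2V V_def E_def in \<open>auto simp: eG'\<close>)
        then show False using ac2 unfolding acyclic_alt by blast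
      next
        case False
        then obtain a where "a \<in> set vs" "a \<notin> F2" by blast
        then obtain ia where ia: "ia < n" "vs ! ia \<notin> F2" using n_def by (metis in_set_conv_nth)
        obtain b where "b \<in> set vs" "b \<notin> F1" using nF1 by blast
        then obtain ib where ib: "ib < n" "vs ! ib \<notin> F1" using n_def by (metis in_set_conv_nth)
        have inset: "vs ! k \<in> V \<inter> (F1 \<union> F2)" if "k < n" for k
        proof -
          have "vs ! k \<in> set vs" using that n_def by simp
          then show ?thesis using sv by blast
        qed
        define x0 where "x0 = vs ! ia"
        have x0: "x0 \<in> V \<inter> F1" using inset[OF ia(1)] ia(2) x0_def by auto
        define P where "P k = (vs ! k \<in> T1 x0)" for k
        have Pa: "P ia" using T1_self[OF x0] unfolding P_def x0_def by simp
        have Pb: "\<not> P ib" using ib unfolding P_def T1_def by simp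
        obtain i where i: "i < n" "P i" "\<not> P (Suc i mod n)" using cross_index[OF ia(1) Pa ib(1) Pb] by blast
        obtain j where j: "j < n" "\<not> P j" "\<not> \<not> P (Suc j mod n)"
          using cross_index[of ib n "\<lambda>k. \<not> P k" ia] ib(1) ia(1) Pa Pb by blast
        have nlt: "Suc k mod n < n" for k using n3 by simp
        have edge: "{vs ! k, vs ! (Suc k mod n)} \<in># E" if "k < n" for k
          using cyc_edge_mod[OF c, of k] that ee n_def by auto
        have out: "vs ! l \<in> V - (C1 \<union> F1)" if "k < n" "l < n" "l = Suc k mod n \<or> k = Suc l mod n"
          "P k" "\<not> P l" for k l
        proof -
          have l: "l < n" by fact
          have kl: "k \<noteq> l" using that(4,5) by auto
          have neq: "vs ! k \<noteq> vs ! l" using dist kl l that(1) n_def by (simp add: nth_eq_iff_index_eq)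
          have ed: "{vs ! k, vs ! l} \<in># E"
            using that(3) edge[OF that(1)] edge[OF l] by (auto simp: insert_commute)
          have vk: "vs ! k \<in> F1" and r: "R1\<^sup>*\<^sup>* x0 (vs ! k)" using that(4) unfolding P_def T1_def by auto
          show ?thesis
          proof (cases "vs ! l \<in> F1")
            case True
            then have "R1 (vs ! k) (vs ! l)" using R1_iff neq ed vk by simp
            then have "R1\<^sup>*\<^sup>* x0 (vs ! l)" using r by (meson rtranclp.rtrancl_into_rtrancl)
            then have "P l" unfolding P_def T1_def using True inset[OF l] by simp
            then show ?thesis using that(5) by simp
          next
            case False
            then show ?thesis using inset[OF l] F2V by auto
          qed
        qed
        have oi: "vs ! (Suc i mod n) \<in> V - (C1 \<union> F1)" using out[OF i(1) nlt _ i(2,3)] by simp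
        have oj: "vs ! j \<in> V - (C1 \<union> F1)" using out[OF nlt[of j] j(1) _ _ j(2)] j(3) by simp
        have dif: "{vs ! i, vs ! (Suc i mod n)} \<noteq> {vs ! j, vs ! (Suc j mod n)}"
        proof
          assume eq: "{vs ! i, vs ! (Suc i mod n)} = {vs ! j, vs ! (Suc j mod n)}"
          have "vs ! i \<noteq> vs ! j" using i(2) j(2) unfolding P_def by auto
          then have "vs ! i = vs ! (Suc j mod n)" using eq by blast
          then have e1: "i = Suc j mod n" using dist i(1) nlt n_def by (simp add: nth_eq_iff_index_eq)
          have "vs ! (Suc i mod n) \<noteq> vs ! (Suc j mod n)" using i(3) j(3) unfolding P_def by auto
          then have "vs ! (Suc i mod n) = vs ! j" using eq by blast
          then have e2: "Suc i mod n = j" using dist j(1) nlt n_def by (simp add: nth_eq_iff_index_eq)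
          show False using mod_two_step[OF n3 i(1)] e1 e2 by simp
        qed
        show False
        proof (rule no2[OF x0 edge[OF i(1)] edge[OF j(1)] dif])
          show "{vs ! i, vs ! (Suc i mod n)} \<inter> T1 x0 \<noteq> {}" using i(2) unfolding P_def by blast
          show "{vs ! i, vs ! (Suc i mod n)} \<inter> (V - (C1 \<union> F1)) \<noteq> {}" using oi by blast
          show "{vs ! j, vs ! (Suc j mod n)} \<inter> T1 x0 \<noteq> {}" using j(3) unfolding P_def by blast
          show "{vs ! j, vs ! (Suc j mod n)} \<inter> (V - (C1 \<union> F1)) \<noteq> {}" using oj by blast
        qed
      qed
    qed
  qed
  have acF: "acyclic_mg (induce G (F1 \<union> F2))" using A1 A2 A3 unfolding acyclic_alt by blast
  have CFd: "(C1 \<union> C2) \<inter> (F1 \<union> F2) = {}" using CF1 CF2 C2V F2V by blast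
  have CV: "C1 \<union> C2 \<subseteq> V" and FV: "F1 \<union> F2 \<subseteq> V" using C1V F1V C2V F2V by auto
  have Rf: "x \<in> V \<and> y \<in> V \<and> x \<in> F1 \<union> F2 \<and> y \<in> F1 \<union> F2 \<and> x \<noteq> y \<and> {x,y} \<in># E" if "R x y" for x y
    using that R_iff eV by blast
  have tree: "e_between G (verts T) (V - ((C1 \<union> C2) \<union> (F1 \<union> F2))) \<le> 1"
    if Tc: "T \<in> components (induce G (F1 \<union> F2))" for T
  proof -
    obtain v where v: "v \<in> V \<inter> (F1 \<union> F2)" and Tv: "T = induce (induce G (F1 \<union> F2)) {u. R\<^sup>*\<^sup>* v u}"
      using Tc unfolding components_def component_verts_def R_def V_def by auto
    define S where "S = V \<inter> (F1 \<union> F2) \<inter> {u. R\<^sup>*\<^sup>* v u}"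
    have vT: "verts T = S" unfolding Tv S_def V_def by auto
    define W where "W = V - ((C1 \<union> C2) \<union> (F1 \<union> F2))"
    have eb: "e_between G X Y = size (filter_mset (\<lambda>e. e \<inter> X \<noteq> {} \<and> e \<inter> Y \<noteq> {}) E)" for X Y
      unfolding e_between_def E_def ..
    have goal: "size (filter_mset (\<lambda>e. e \<inter> S \<noteq> {} \<and> e \<inter> W \<noteq> {}) E) \<le> 1"
    proof (cases "\<exists>w\<in>S. w \<in> F2")
      case True
      then obtain w where wS: "w \<in> S" and wF2: "w \<in> F2" by blast
      have Rvw: "R\<^sup>*\<^sup>* v w" and wV: "w \<in> V" using wS unfolding S_def by auto
      have inv: "(x \<in> F2 \<and> R2\<^sup>*\<^sup>* w x) \<or>
          (x \<in> F1 \<and> (\<exists>a b. a \<in> F2 \<and> R2\<^sup>*\<^sup>* w a \<and> b \<in> V \<inter> F1 \<and> R1\<^sup>*\<^sup>* b x \<and> {a,b} \<in># E))"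
        if "R\<^sup>*\<^sup>* w x" for x
        using that
      proof (induction rule: rtranclp_induct)
        case base then show ?case using wF2 by simp
      next
        case (step y z)
        have yz: "y \<in> V" "z \<in> V" "y \<in> F1 \<union> F2" "z \<in> F1 \<union> F2" "y \<noteq> z" "{y,z} \<in># E"
          using Rf[OF step.hyps(2)] by auto
        show ?case
        proof (cases "z \<in> F2")
          case zF2: True
          from step.IH show ?thesis
          proof
            assume "y \<in> F2 \<and> R2\<^sup>*\<^sup>* w y"
            moreover have "R2 y z" using R2_iff yz zF2 calculation by simp
            ultimately show ?thesis using zF2 by (meson rtranclp.rtrancl_into_rtrancl)
          next
            assume "y \<in> F1 \<and> (\<exists>a b. a \<in> F2 \<and> R2\<^sup>*\<^sup>* w a \<and> b \<in> V \<inter> F1 \<and> R1\<^sup>*\<^sup>* b y \<and> {a,b} \<in># E)"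
            then obtain a b where yF1: "y \<in> F1" and ab: "a \<in> F2" "R2\<^sup>*\<^sup>* w a" "b \<in> V \<inter> F1" "R1\<^sup>*\<^sup>* b y" "{a,b} \<in># E"
              by blast
            show ?thesis
            proof (cases "{a,b} = {y,z}")
              case True
              have "a \<noteq> y" using ab(1) yF1 F12 by blast
              then have "a = z" using True by (metis doubleton_eq_iff)
              then show ?thesis using ab zF2 by simp
            next
              case False
              show ?thesis
              proof (rule FalseE, rule no2[OF ab(3) ab(5) yz(6) False])
                show "{a, b} \<inter> T1 b \<noteq> {}" using T1_self[OF ab(3)] by blast
                show "{a, b} \<inter> (V - (C1 \<union> F1)) \<noteq> {}" using ab(1) F2V by blast
                have "y \<in> T1 b" unfolding T1_def using ab(4) yF1 yz(1) by simp
                then show "{y, z} \<inter> T1 b \<noteq> {}" by blast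
                show "{y, z} \<inter> (V - (C1 \<union> F1)) \<noteq> {}" using zF2 F2V by blast
              qed
            qed
          qed
        next
          case zF2: False
          then have zF1: "z \<in> F1" using yz by blast
          from step.IH show ?thesis
          proof
            assume "y \<in> F2 \<and> R2\<^sup>*\<^sup>* w y"
            then show ?thesis using zF1 yz by blast
          next
            assume "y \<in> F1 \<and> (\<exists>a b. a \<in> F2 \<and> R2\<^sup>*\<^sup>* w a \<and> b \<in> V \<inter> F1 \<and> R1\<^sup>*\<^sup>* b y \<and> {a,b} \<in># E)"
            then obtain a b where yF1: "y \<in> F1" and ab: "a \<in> F2" "R2\<^sup>*\<^sup>* w a" "b \<in> V \<inter> F1" "R1\<^sup>*\<^sup>* b y" "{a,b} \<in># E"
              by blast
            have "R1 y z" using R1_iff yz yF1 zF1 by simp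
            then have "R1\<^sup>*\<^sup>* b z" using ab(4) by (meson rtranclp.rtrancl_into_rtrancl)
            then show ?thesis using zF1 ab by blast
          qed
        qed
      qed
      have Rwv: "R\<^sup>*\<^sup>* w v" using rtr_sym[of "induce G (F1 \<union> F2)"] Rvw unfolding R_def by blast
      have sub: "filter_mset (\<lambda>e. e \<inter> S \<noteq> {} \<and> e \<inter> W \<noteq> {}) E \<subseteq>#
          filter_mset (\<lambda>e. e \<inter> T2 w \<noteq> {} \<and> e \<inter> (verts G' - (C2 \<union> F2)) \<noteq> {})
            (filter_mset (\<lambda>e. e \<subseteq> V - (C1 \<union> F1)) E)"
      proof (rule filter_sub_filter)
        fix e assume eE: "e \<in># E" and h: "e \<inter> S \<noteq> {} \<and> e \<inter> W \<noteq> {}"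
        then obtain x y where x: "x \<in> e" "x \<in> S" and y: "y \<in> e" "y \<in> W" by blast
        have xy: "x \<noteq> y" using x(2) y(2) unfolding S_def W_def by blast
        have ee: "e = {x,y}" using edge_pair[OF wG _ x(1) y(1) xy] eE unfolding E_def by simp
        have Rwx: "R\<^sup>*\<^sup>* w x" using Rwv x(2) unfolding S_def by (meson mem_Collect_eq IntD2 rtranclp_trans)
        have yV: "y \<in> V - (C1 \<union> F1)" "y \<notin> C2 \<union> F2" using y(2) unfolding W_def by auto
        from inv[OF Rwx] show "e \<subseteq> V - (C1 \<union> F1) \<and> e \<inter> T2 w \<noteq> {} \<and> e \<inter> (verts G' - (C2 \<union> F2)) \<noteq> {}"
        proof
          assume xF2: "x \<in> F2 \<and> R2\<^sup>*\<^sup>* w x"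
          have "x \<in> T2 w" unfolding T2_def using xF2 F2V vG' by auto
          moreover have "x \<in> V - (C1 \<union> F1)" using xF2 F2V by auto
          ultimately show ?thesis using ee yV vG' by auto
        next
          assume "x \<in> F1 \<and> (\<exists>a b. a \<in> F2 \<and> R2\<^sup>*\<^sup>* w a \<and> b \<in> V \<inter> F1 \<and> R1\<^sup>*\<^sup>* b x \<and> {a,b} \<in># E)"
          then obtain a b where xF1: "x \<in> F1" and ab: "a \<in> F2" "R2\<^sup>*\<^sup>* w a" "b \<in> V \<inter> F1" "R1\<^sup>*\<^sup>* b x" "{a,b} \<in># E"
            by blast
          have "a \<notin> e" using ee xF1 ab(1) F12 y(2) unfolding W_def by auto
          then have neq: "{a,b} \<noteq> e" by auto
          show ?thesis
          proof (rule FalseE, rule no2[OF ab(3) ab(5) eE neq])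
            show "{a, b} \<inter> T1 b \<noteq> {}" using T1_self[OF ab(3)] by blast
            show "{a, b} \<inter> (V - (C1 \<union> F1)) \<noteq> {}" using ab(1) F2V by blast
            have "x \<in> T1 b" unfolding T1_def using ab(4) xF1 x(2) unfolding S_def by simp
            then show "e \<inter> T1 b \<noteq> {}" using x(1) by blast
            show "e \<inter> (V - (C1 \<union> F1)) \<noteq> {}" using y(1) yV by blast
          qed
        qed
      qed
      have "w \<in> verts G' \<inter> F2" using wF2 F2V vG' by auto
      from comp2[OF this] have "size (filter_mset (\<lambda>e. e \<inter> T2 w \<noteq> {} \<and> e \<inter> (verts G' - (C2 \<union> F2)) \<noteq> {})
            (filter_mset (\<lambda>e. e \<subseteq> V - (C1 \<union> F1)) E)) \<le> 1"
        unfolding e_between_def eG' .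
      then show ?thesis using size_mset_mono[OF sub] by linarith
    next
      case False
      have vS: "v \<in> S" using v unfolding S_def by simp
      then have vF1: "v \<in> F1" using False v by blast
      have R1r: "R1\<^sup>*\<^sup>* v x" if "R\<^sup>*\<^sup>* v x" for x
        using that
      proof (induction rule: rtranclp_induct)
        case (step y z)
        have yz: "y \<in> V" "z \<in> V" "y \<in> F1 \<union> F2" "z \<in> F1 \<union> F2" "y \<noteq> z" "{y,z} \<in># E"
          using Rf[OF step.hyps(2)] by auto
        have "R\<^sup>*\<^sup>* v z" using step.hyps by (meson rtranclp.rtrancl_into_rtrancl)
        then have "z \<in> S" "y \<in> S" using step.hyps(1) yz unfolding S_def by auto
        then have "y \<in> F1" "z \<in> F1" using False yz by auto
        then have "R1 y z" using R1_iff yz by simp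
        then show ?case using step.IH by (meson rtranclp.rtrancl_into_rtrancl)
      qed simp
      have sub: "filter_mset (\<lambda>e. e \<inter> S \<noteq> {} \<and> e \<inter> W \<noteq> {}) E \<subseteq>#
          filter_mset (\<lambda>e. e \<inter> T1 v \<noteq> {} \<and> e \<inter> (V - (C1 \<union> F1)) \<noteq> {}) E"
      proof (rule filter_mono_pred)
        fix e assume eE: "e \<in># E" and h: "e \<inter> S \<noteq> {} \<and> e \<inter> W \<noteq> {}"
        then obtain x y where x: "x \<in> e" "x \<in> S" and y: "y \<in> e" "y \<in> W" by blast
        have "x \<in> F1" using x(2) False unfolding S_def by blast
        moreover have "R1\<^sup>*\<^sup>* v x" using R1r x(2) unfolding S_def by blast
        ultimately have "x \<in> T1 v" using x(2) unfolding T1_def S_def by simp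
        moreover have "y \<in> V - (C1 \<union> F1)" using y(2) unfolding W_def by auto
        ultimately show "e \<inter> T1 v \<noteq> {} \<and> e \<inter> (V - (C1 \<union> F1)) \<noteq> {}" using x(1) y(1) by blast
      qed
      have "v \<in> V \<inter> F1" using v vF1 by simp
      from comp1[OF this] have "size (filter_mset (\<lambda>e. e \<inter> T1 v \<noteq> {} \<and> e \<inter> (V - (C1 \<union> F1)) \<noteq> {}) E) \<le> 1"
        unfolding eb .
      then show ?thesis using size_mset_mono[OF sub] by linarith
    qed
    show ?thesis unfolding vT eb W_def[symmetric] using goal .
  qed
  show ?thesis unfolding is_fvc_def V_def[symmetric] using CFd CV FV acF tree by blast
qed


theorem lemma12:
  fixes G :: "'a mgraph" and z :: nat and C1 F1 C2 F2 :: "'a set"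
  assumes "wf_mgraph G"
    and "is_z_antler G z C1 F1"
    and "is_z_antler (del_verts G (C1 \<union> F1)) z C2 F2"
  shows "is_z_antler G z (C1 \<union> C2) (F1 \<union> F2)"
proof -
  have f1: "is_fvc G C1 F1" using assms(2) unfolding is_z_antler_def is_antler_def by blast
  have f2: "is_fvc (del_verts G (C1 \<union> F1)) C2 F2" using assms(3) unfolding is_z_antler_def is_antler_def by blast
  obtain H1 where h1: "is_certificate (induce G (C1 \<union> F1)) C1 H1" "certificate_order H1 C1 z"
    using assms(2) unfolding is_z_antler_def by blast
  obtain H2 where h2: "is_certificate (induce (del_verts G (C1 \<union> F1)) (C2 \<union> F2)) C2 H2" "certificate_order H2 C2 z"
    using assms(3) unfolding is_z_antler_def by blast
  have sub: "C2 \<union> F2 \<subseteq> verts G - (C1 \<union> F1)" using f2 unfolding is_fvc_def by auto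
  have cc: "is_certificate (induce G ((C1 \<union> C2) \<union> (F1 \<union> F2))) (C1 \<union> C2) (gunion H1 H2)
       \<and> certificate_order (gunion H1 H2) (C1 \<union> C2) z"
    by (rule cert_combine[OF assms(1) sub h1 h2])
  have fvc: "is_fvc G (C1 \<union> C2) (F1 \<union> F2)" by (rule fvc_combine[OF assms(1) f1 f2])
  have "card (C1 \<union> C2) = fvs (gunion H1 H2)" using cc unfolding is_certificate_def by blast
  also have "\<dots> \<le> fvs (induce G ((C1 \<union> C2) \<union> (F1 \<union> F2)))"
    by (rule fvs_mono_sub[OF wf_induce[OF assms(1)]]) (use cc in \<open>simp add: is_certificate_def\<close>)
  finally have "card (C1 \<union> C2) \<le> fvs (induce G ((C1 \<union> C2) \<union> (F1 \<union> F2)))" .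
  then show ?thesis unfolding is_z_antler_def is_antler_def using fvc cc by blast
qed

end
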